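(* Consider the linear time-invariant descriptor system $$E x_{k+1}=A x_k+B u_k+w_k,\qquad y_{k}=H x_{k}+v_{k-1},$$ with $x_k\in\mathbb{R}^n$, $y_k\in\mathbb{R}^m$, $u_k\in\mathbb{R}^q$, $E,A\in\mathbb{R}^{n_1\times n}$, $B\in\mathbb{R}^{n_1\times q}$, $H\in\mathbb{R}^{m\times n}$. Assume $\begin{bmatrix}E & A\end{bmatrix}$ has full row rank, $\begin{bmatrix}E^T & H^T\end{bmatrix}^T$ has full column rank, and that $P_0,Q,R$ are symmetric positive definite. Let $\bar x_0\in\mathbb{R}^n$, let inputs $u_0,u_1,\dots$ and measurements $y_1,y_2,\dots$ be given, and let $T\ge 2$. Define the unconstrained objective $$J_T(x_1,\dots,x_T)=\|Ex_1-A\bar x_0-Bu_0\|^2_{P_0^{(-)}}+\sum_{k=1}^{T-1}\|Ex_{k+1}-Ax_k-Bu_k\|_Q^2+\sum_{k=1}^{T-1}\|y_k-Hx_k\|_R^2,$$ where $P_0^{(-)}=AP_0A^T+Q$. Define recursively, starting from $\hat x_0^{(+)}=\bar x_0$, $P_0^{(+)}=P_0$, for $k=1,\dots,T-1$: $$P_k^{(+)}=\big(E^T(P_{k-1}^{(-)})^{-1}E+H^TR^{-1}H\big)^{-1},\qquad P_k^{(-)}=AP_k^{(+)}A^T+Q,$$ $$\hat x_k^{(+)}=P_k^{(+)}H^TR^{-1}y_k+P_k^{(+)}E^T(P_{k-1}^{(-)})^{-1}\big(A\hat x_{k-1}^{(+)}+Bu_{k-1}\big).$$ Then for every $x_T\in\mathbb{R}^n$,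 $$\min_{x_1,\dots,x_{T-1}} J_T(x_1,\dots,x_T)=\|Ex_T-z_T\|^2_{P_{T-1}^{(-)}}+\widehat J_{T-1},$$ where $z_T:=A\hat x_{T-1}^{(+)}+Bu_{T-1}$ and $\widehat J_{T-1}$ is a constant independent of $x_T$, namely the minimum over $x_1,\dots,x_{T-1}$ of $\|Ex_1-A\bar x_0-Bu_0\|^2_{P_0^{(-)}}+\sum_{k=1}^{T-2}\|Ex_{k+1}-Ax_k-Bu_k\|_Q^2+\sum_{k=1}^{T-1}\|y_k-Hx_k\|_R^2$.
   Context: For a symmetric positive definite matrix $S$ and a vector $z$, the notation $\|z\|_S^2$ means $z^TS^{-1}z$. All matrices $P_k^{(+)}$, $P_k^{(-)}$ defined by the recursion are symmetric positive definite under the stated assumptions, so all inverses exist. The left-hand side is the arrival cost of the unconstrained full information estimation problem (no inequality constraints on states or noises). *)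

theory Defs
  imports "HOL-Analysis.Analysis"
begin

definition sym_pd :: "real^'k^'k \<Rightarrow> bool" where
  "sym_pd P \<longleftrightarrow> transpose P = P \<and> (\<forall>x. x \<noteq> 0 \<longrightarrow> x \<bullet> (P *v x) > 0)"

definition wnorm :: "real^'k^'k \<Rightarrow> real^'k \<Rightarrow> real" where
  "wnorm S z = z \<bullet> (matrix_inv S *v z)"

definition hblock :: "real^'a^'r \<Rightarrow> real^'b^'r \<Rightarrow> real^('a + 'b)^'r" where
  "hblock M N = (\<chi> i. \<chi> j. case j of Inl a \<Rightarrow> M $ i $ a | Inr b \<Rightarrow> N $ i $ b)"

definition vblock :: "real^'c^'a \<Rightarrow> real^'c^'b \<Rightarrow> real^'c^('a + 'b)" where
  "vblock M N = (\<chi> i. case i of Inl a \<Rightarrow> M $ a | Inr b \<Rightarrow> N $ b)"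

fun Pplus :: "real^'n^'n1 \<Rightarrow> real^'n^'n1 \<Rightarrow> real^'n^'m \<Rightarrow> real^'n1^'n1 \<Rightarrow> real^'m^'m
               \<Rightarrow> real^'n^'n \<Rightarrow> nat \<Rightarrow> real^'n^'n" where
  "Pplus E A H Q R P0 0 = P0"
| "Pplus E A H Q R P0 (Suc k) =
     matrix_inv (transpose E ** matrix_inv (A ** Pplus E A H Q R P0 k ** transpose A + Q) ** E
                 + transpose H ** matrix_inv R ** H)"

definition Pminus :: "real^'n^'n1 \<Rightarrow> real^'n^'n1 \<Rightarrow> real^'n^'m \<Rightarrow> real^'n1^'n1 \<Rightarrow> real^'m^'m
               \<Rightarrow> real^'n^'n \<Rightarrow> nat \<Rightarrow> real^'n1^'n1" where
  "Pminus E A H Q R P0 k = A ** Pplus E A H Q R P0 k ** transpose A + Q"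

fun xplus :: "real^'n^'n1 \<Rightarrow> real^'n^'n1 \<Rightarrow> real^'q^'n1 \<Rightarrow> real^'n^'m \<Rightarrow> real^'n1^'n1 \<Rightarrow> real^'m^'m
               \<Rightarrow> real^'n^'n \<Rightarrow> real^'n \<Rightarrow> (nat \<Rightarrow> real^'q) \<Rightarrow> (nat \<Rightarrow> real^'m) \<Rightarrow> nat \<Rightarrow> real^'n" where
  "xplus E A B H Q R P0 xbar u y 0 = xbar"
| "xplus E A B H Q R P0 xbar u y (Suc k) =
     Pplus E A H Q R P0 (Suc k) *v (transpose H *v (matrix_inv R *v y (Suc k)))
     + Pplus E A H Q R P0 (Suc k) *v (transpose E *v (matrix_inv (Pminus E A H Q R P0 k) *v
          (A *v xplus E A B H Q R P0 xbar u y k + B *v u k)))"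

definition JT :: "real^'n^'n1 \<Rightarrow> real^'n^'n1 \<Rightarrow> real^'q^'n1 \<Rightarrow> real^'n^'m \<Rightarrow> real^'n1^'n1 \<Rightarrow> real^'m^'m
               \<Rightarrow> real^'n^'n \<Rightarrow> real^'n \<Rightarrow> (nat \<Rightarrow> real^'q) \<Rightarrow> (nat \<Rightarrow> real^'m) \<Rightarrow> nat
               \<Rightarrow> (nat \<Rightarrow> real^'n) \<Rightarrow> real" where
  "JT E A B H Q R P0 xbar u y T x =
     wnorm (A ** P0 ** transpose A + Q) (E *v x 1 - A *v xbar - B *v u 0)
     + (\<Sum>k=1..T-1. wnorm Q (E *v x (k+1) - A *v x k - B *v u k))
     + (\<Sum>k=1..T-1. wnorm R (y k - H *v x k))"

text \<open>reduced objective defining the constant \<open>\<widehat>J_{T-1}\<close>; only x 1, ..., x (T-1) are used\<close>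
definition Jred :: "real^'n^'n1 \<Rightarrow> real^'n^'n1 \<Rightarrow> real^'q^'n1 \<Rightarrow> real^'n^'m \<Rightarrow> real^'n1^'n1 \<Rightarrow> real^'m^'m
               \<Rightarrow> real^'n^'n \<Rightarrow> real^'n \<Rightarrow> (nat \<Rightarrow> real^'q) \<Rightarrow> (nat \<Rightarrow> real^'m) \<Rightarrow> nat
               \<Rightarrow> (nat \<Rightarrow> real^'n) \<Rightarrow> real" where
  "Jred E A B H Q R P0 xbar u y T x =
     wnorm (A ** P0 ** transpose A + Q) (E *v x 1 - A *v xbar - B *v u 0)
     + (\<Sum>k=1..T-2. wnorm Q (E *v x (k+1) - A *v x k - B *v u k))
     + (\<Sum>k=1..T-1. wnorm R (y k - H *v x k))"

definition is_min :: "real set \<Rightarrow> real \<Rightarrow> bool" where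
  "is_min S v \<longleftrightarrow> v \<in> S \<and> (\<forall>s\<in>S. v \<le> s)"

end

theory Submission
  imports Defs
begin

declare transpose_matrix_vector [simp del]

lemma dotT: "((M::real^'a^'b) *v x) \<bullet> y = x \<bullet> (transpose M *v y)"
  by (metis dot_lmul_matrix inner_commute transpose_matrix_vector)

lemma inv_props:
  fixes A :: "real^'a^'a"
  assumes "invertible A"
  shows "A ** matrix_inv A = mat 1" "matrix_inv A ** A = mat 1"
proof -
  have "\<exists>A'. A ** A' = mat 1 \<and> A' ** A = mat 1" using assms invertible_def by blast
  then have "A ** matrix_inv A = mat 1 \<and> matrix_inv A ** A = mat 1"
    unfolding matrix_inv_def by (rule someI_ex)
  then show "A ** matrix_inv A = mat 1" "matrix_inv A ** A = mat 1" by auto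
qed

lemma inv_unique:
  fixes A :: "real^'a^'a"
  assumes "invertible A" "A ** B = mat 1"
  shows "matrix_inv A = B"
  by (metis assms inv_props(2) matrix_mul_assoc matrix_mul_lid matrix_mul_rid)

lemma inv_inv:
  fixes A :: "real^'a^'a"
  assumes "invertible A"
  shows "invertible (matrix_inv A)" "matrix_inv (matrix_inv A) = A"
proof -
  show i: "invertible (matrix_inv A)" using inv_props[OF assms] invertible_def by blast
  show "matrix_inv (matrix_inv A) = A" by (rule inv_unique[OF i inv_props(2)[OF assms]])
qed

lemma sym_dot:
  fixes W :: "real^'a^'a"
  assumes "transpose W = W"
  shows "x \<bullet> (W *v y) = y \<bullet> (W *v x)"
  by (metis assms dotT inner_commute)

lemma pd_invertible:
  fixes S :: "real^'a^'a"
  assumes "sym_pd S" shows "invertible S"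
proof -
  have "inj ((*v) S)"
  proof (rule injI)
    fix a b assume "S *v a = S *v b"
    then have "S *v (a - b) = 0" by (simp add: matrix_vector_mult_diff_distrib)
    then show "a = b" using assms unfolding sym_pd_def
      by (metis inner_zero_right less_irrefl right_minus_eq)
  qed
  then show ?thesis using invertible_left_inverse matrix_left_invertible_injective by blast
qed

lemma pd_inv:
  fixes S :: "real^'a^'a"
  assumes "sym_pd S" shows "sym_pd (matrix_inv S)"
proof -
  have i: "invertible S" using pd_invertible assms by blast
  have tS: "transpose S = S" using assms sym_pd_def by blast
  have "transpose (matrix_inv S) ** S = mat 1"
    by (metis i inv_props(1) matrix_transpose_mul tS transpose_mat)
  then have t: "transpose (matrix_inv S) = matrix_inv S"
    by (metis i inv_props(1) matrix_mul_assoc matrix_mul_lid matrix_mul_rid)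
  have "x \<bullet> (matrix_inv S *v x) > 0" if "x \<noteq> 0" for x
  proof -
    let ?w = "matrix_inv S *v x"
    have x: "x = S *v ?w" using inv_props(1)[OF i] by (simp add: matrix_vector_mul_assoc)
    have "?w \<noteq> 0" using x that by auto
    then have "?w \<bullet> (S *v ?w) > 0" using assms sym_pd_def by blast
    then show ?thesis by (metis x inner_commute)
  qed
  then show ?thesis using t sym_pd_def by blast
qed

lemma wnorm_nonneg:
  fixes S :: "real^'a^'a"
  assumes "sym_pd S" shows "wnorm S z \<ge> 0"
  using pd_inv[OF assms] unfolding sym_pd_def wnorm_def
  by (metis inner_zero_left less_eq_real_def)

lemma wnorm_zero: "wnorm S 0 = 0" by (simp add: wnorm_def)

lemma quad_add:
  fixes W :: "real^'a^'a"
  assumes "transpose W = W"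
  shows "(a + b) \<bullet> (W *v (a + b)) = a \<bullet> (W *v a) + 2 * (b \<bullet> (W *v a)) + b \<bullet> (W *v b)"
  using sym_dot[OF assms, of a b]
  by (simp add: matrix_vector_right_distrib inner_add_left inner_add_right)

lemma quad_diff:
  fixes W :: "real^'a^'a"
  assumes "transpose W = W"
  shows "(a - b) \<bullet> (W *v (a - b)) = a \<bullet> (W *v a) - 2 * (b \<bullet> (W *v a)) + b \<bullet> (W *v b)"
  using sym_dot[OF assms, of a b]
  by (simp add: matrix_vector_mult_diff_distrib inner_diff_left inner_diff_right)


lemma transpose_add: "transpose (X + Y) = transpose X + (transpose Y :: 'x::semiring_1^'a^'b)"
  by (simp add: transpose_def vec_eq_iff)

lemma pd_pos: "sym_pd P \<Longrightarrow> x \<noteq> 0 \<Longrightarrow> x \<bullet> (P *v x) > 0"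
  unfolding sym_pd_def by blast

lemma psd_of_pd: "sym_pd P \<Longrightarrow> x \<bullet> (P *v x) \<ge> 0"
  unfolding sym_pd_def by (cases "x = 0") (auto intro: less_imp_le)

lemma dot_AMA:
  fixes A :: "real^'a^'b" and P :: "real^'a^'a"
  shows "x \<bullet> ((A ** P ** transpose A) *v x) = (transpose A *v x) \<bullet> (P *v (transpose A *v x))"
  by (metis dotT inner_commute matrix_vector_mul_assoc transpose_transpose)

lemma dot_ATMA:
  fixes E :: "real^'a^'b" and W :: "real^'b^'b"
  shows "x \<bullet> ((transpose E ** W ** E) *v x) = (E *v x) \<bullet> (W *v (E *v x))"
  using dot_AMA[of x "transpose E" W] by simp

lemma pd_APAQ:
  fixes A :: "real^'a^'b" and P :: "real^'a^'a"
  assumes "sym_pd P" "sym_pd Q"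
  shows "sym_pd (A ** P ** transpose A + Q)"
proof -
  have tP: "transpose P = P" and tQ: "transpose Q = Q" using assms sym_pd_def by auto
  have "transpose (A ** P ** transpose A + Q) = A ** P ** transpose A + Q"
    by (simp add: matrix_transpose_mul tP tQ transpose_add matrix_mul_assoc[symmetric])
  moreover have "x \<bullet> ((A ** P ** transpose A + Q) *v x) > 0" if "x \<noteq> 0" for x
  proof -
    have "x \<bullet> ((A ** P ** transpose A + Q) *v x) = (transpose A *v x) \<bullet> (P *v (transpose A *v x)) + x \<bullet> (Q *v x)"
      by (simp add: matrix_vector_mult_add_rdistrib inner_add_right dot_AMA)
    moreover have "(transpose A *v x) \<bullet> (P *v (transpose A *v x)) \<ge> 0" using psd_of_pd assms(1) by blast
    moreover have "x \<bullet> (Q *v x) > 0" using assms(2) that pd_pos by blast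
    ultimately show ?thesis by linarith
  qed
  ultimately show ?thesis unfolding sym_pd_def by blast
qed

lemma pd_M:
  fixes E :: "real^'a^'b" and H :: "real^'a^'c"
  assumes "sym_pd S" "sym_pd R" "\<And>x. E *v x = 0 \<Longrightarrow> H *v x = 0 \<Longrightarrow> x = 0"
  shows "sym_pd (transpose E ** matrix_inv S ** E + transpose H ** matrix_inv R ** H)"
proof -
  have S: "sym_pd (matrix_inv S)" and R: "sym_pd (matrix_inv R)" using pd_inv assms(1,2) by auto
  have tS: "transpose (matrix_inv S) = matrix_inv S" and tR: "transpose (matrix_inv R) = matrix_inv R"
    using S R sym_pd_def by auto
  have "transpose (transpose E ** matrix_inv S ** E + transpose H ** matrix_inv R ** H) =
        transpose E ** matrix_inv S ** E + transpose H ** matrix_inv R ** H"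
  proof -
    have 1: "transpose (transpose E ** matrix_inv S ** E) = transpose E ** matrix_inv S ** E"
      by (simp only: matrix_transpose_mul transpose_transpose tS matrix_mul_assoc)
    have 2: "transpose (transpose H ** matrix_inv R ** H) = transpose H ** matrix_inv R ** H"
      by (simp only: matrix_transpose_mul transpose_transpose tR matrix_mul_assoc)
    show ?thesis by (simp only: transpose_add 1 2)
  qed
  moreover have "x \<bullet> ((transpose E ** matrix_inv S ** E + transpose H ** matrix_inv R ** H) *v x) > 0" if "x \<noteq> 0" for x
  proof -
    have e: "x \<bullet> ((transpose E ** matrix_inv S ** E + transpose H ** matrix_inv R ** H) *v x) =
       (E *v x) \<bullet> (matrix_inv S *v (E *v x)) + (H *v x) \<bullet> (matrix_inv R *v (H *v x))"
      by (simp only: matrix_vector_mult_add_rdistrib inner_add_right dot_ATMA)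
    have a: "(E *v x) \<bullet> (matrix_inv S *v (E *v x)) \<ge> 0" "(H *v x) \<bullet> (matrix_inv R *v (H *v x)) \<ge> 0"
      using psd_of_pd[OF S, of "E *v x"] psd_of_pd[OF R, of "H *v x"] by auto
    have "E *v x \<noteq> 0 \<or> H *v x \<noteq> 0" using assms(3)[of x] that by blast
    then have "(E *v x) \<bullet> (matrix_inv S *v (E *v x)) > 0 \<or> (H *v x) \<bullet> (matrix_inv R *v (H *v x)) > 0"
      using pd_pos[OF S, of "E *v x"] pd_pos[OF R, of "H *v x"] by blast
    then show ?thesis using e a by linarith
  qed
  ultimately show ?thesis unfolding sym_pd_def by blast
qed
lemma vblock_inj:
  fixes E :: "real^'a^'b" and H :: "real^'a^'c"
  assumes "rank (vblock E H) = CARD('a)" "E *v x = 0" "H *v x = 0"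
  shows "x = 0"
proof -
  have inj: "inj ((*v) (vblock E H))" using assms(1) full_rank_injective by blast
  have "vblock E H *v x = 0"
  proof -
    have "(vblock E H *v x) $ i = 0" for i
    proof (cases i)
      case (Inl a)
      have "(E *v x) $ a = 0" using assms(2) by simp
      then show ?thesis using Inl by (simp add: vblock_def matrix_vector_mult_def)
    next
      case (Inr b)
      have "(H *v x) $ b = 0" using assms(3) by simp
      then show ?thesis using Inr by (simp add: vblock_def matrix_vector_mult_def)
    qed
    then show ?thesis by (simp add: vec_eq_iff)
  qed
  then show ?thesis using inj by (metis injD matrix_vector_mult_0_right)
qed


lemma lin1: "(x::'a::ab_group_add) = u - q \<Longrightarrow> y = p - v \<Longrightarrow> u + v = p + q \<Longrightarrow> x = y"
  by (metis add_diff_cancel_left add_diff_eq diff_add_eq diff_diff_eq2 add.commute)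
lemma lin2: "(X::'a::ab_group_add) = r - d - e \<Longrightarrow> r = d + g \<Longrightarrow> X = g - e"
  by simp

lemma meas_update:
  fixes E :: "real^'n^'n1" and H :: "real^'n^'m" and S :: "real^'n1^'n1" and R :: "real^'m^'m"
    and z :: "real^'n1" and yv :: "real^'m" and x :: "real^'n"
  assumes pS: "sym_pd S" and pR: "sym_pd R" and inj: "\<And>x. E *v x = 0 \<Longrightarrow> H *v x = 0 \<Longrightarrow> x = 0"
  defines "M \<equiv> transpose E ** matrix_inv S ** E + transpose H ** matrix_inv R ** H"
  defines "xh \<equiv> matrix_inv M *v (transpose H *v (matrix_inv R *v yv)) + matrix_inv M *v (transpose E *v (matrix_inv S *v z))"
  shows "wnorm S (E *v x - z) + wnorm R (yv - H *v x) =
         wnorm (matrix_inv M) (x - xh) + (wnorm S (E *v xh - z) + wnorm R (yv - H *v xh))"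
proof -
  define Si where "Si = matrix_inv S"
  define Ri where "Ri = matrix_inv R"
  have pM: "sym_pd M" unfolding M_def using pd_M[OF pS pR inj] by blast
  have iM: "invertible M" using pd_invertible[OF pM] .
  have tSi: "transpose Si = Si" using pd_inv[OF pS] unfolding Si_def sym_pd_def by blast
  have tRi: "transpose Ri = Ri" using pd_inv[OF pR] unfolding Ri_def sym_pd_def by blast
  define e where "e = x - xh"
  define a where "a = E *v xh - z"
  define c where "c = yv - H *v xh"
  have h1: "E *v x - z = a + E *v e" unfolding a_def e_def by (simp add: algebra_simps)
  have h2: "yv - H *v x = c - H *v e" unfolding c_def e_def by (simp add: algebra_simps)
  have h3: "wnorm S (E *v x - z) = a \<bullet> (Si *v a) + 2 * ((E *v e) \<bullet> (Si *v a)) + (E *v e) \<bullet> (Si *v (E *v e))"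
    unfolding wnorm_def h1 Si_def[symmetric] by (rule quad_add[OF tSi])
  have h4: "wnorm R (yv - H *v x) = c \<bullet> (Ri *v c) - 2 * ((H *v e) \<bullet> (Ri *v c)) + (H *v e) \<bullet> (Ri *v (H *v e))"
    unfolding wnorm_def h2 Ri_def[symmetric] by (rule quad_diff[OF tRi])
  have h5: "(E *v e) \<bullet> (Si *v a) = e \<bullet> (transpose E *v (Si *v a))" by (rule dotT)
  have h6: "(H *v e) \<bullet> (Ri *v c) = e \<bullet> (transpose H *v (Ri *v c))" by (rule dotT)
  define p where "p = transpose H *v (Ri *v yv)"
  define q where "q = transpose E *v (Si *v z)"
  have xh: "xh = matrix_inv M *v (p + q)" unfolding xh_def p_def q_def Si_def Ri_def
    by (simp add: matrix_vector_right_distrib)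
  have Mxh: "M *v xh = p + q" unfolding xh matrix_vector_mul_assoc inv_props(1)[OF iM] by simp
  have Mxh2: "M *v xh = transpose E *v (Si *v (E *v xh)) + transpose H *v (Ri *v (H *v xh))"
    unfolding M_def Si_def Ri_def by (simp add: matrix_vector_mult_add_rdistrib matrix_vector_mul_assoc matrix_mul_assoc)
  have h7: "transpose E *v (Si *v a) = transpose H *v (Ri *v c)"
  proof -
    have "transpose E *v (Si *v a) = transpose E *v (Si *v (E *v xh)) - q"
      unfolding a_def q_def by (simp add: matrix_vector_mult_diff_distrib)
    moreover have "transpose H *v (Ri *v c) = p - transpose H *v (Ri *v (H *v xh))"
      unfolding c_def p_def by (simp add: matrix_vector_mult_diff_distrib)
    moreover have "transpose E *v (Si *v (E *v xh)) + transpose H *v (Ri *v (H *v xh)) = p + q"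
      using Mxh Mxh2 by simp
    ultimately show ?thesis by (rule lin1)
  qed
  have h8: "e \<bullet> (M *v e) = (E *v e) \<bullet> (Si *v (E *v e)) + (H *v e) \<bullet> (Ri *v (H *v e))"
    unfolding M_def Si_def Ri_def by (simp only: matrix_vector_mult_add_rdistrib inner_add_right dot_ATMA)
  have h9: "wnorm (matrix_inv M) (x - xh) = e \<bullet> (M *v e)"
    unfolding wnorm_def inv_inv(2)[OF iM] e_def ..
  have h10: "wnorm S (E *v xh - z) = a \<bullet> (Si *v a)" unfolding wnorm_def a_def Si_def ..
  have h11: "wnorm R (yv - H *v xh) = c \<bullet> (Ri *v c)" unfolding wnorm_def c_def Ri_def ..
  show ?thesis unfolding h3 h4 h9 h10 h11 h8 h5 h6 h7 by simp
qed

lemma time_update: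
  fixes A :: "real^'n^'n1" and P :: "real^'n^'n" and Q :: "real^'n1^'n1"
    and cv :: "real^'n1" and xh x :: "real^'n"
  assumes pP: "sym_pd P" and pQ: "sym_pd Q"
  defines "S \<equiv> A ** P ** transpose A + Q"
  defines "xs \<equiv> xh + P *v (transpose A *v (matrix_inv S *v (cv - A *v xh)))"
  shows "wnorm P (x - xh) + wnorm Q (cv - A *v x) =
         wnorm S (cv - A *v xh) + wnorm P (x - xs) + wnorm Q (A *v (x - xs))"
proof -
  have pS: "sym_pd S" unfolding S_def using pd_APAQ[OF pP pQ] .
  have iS: "invertible S" using pd_invertible[OF pS] .
  have iP: "invertible P" using pd_invertible[OF pP] .
  have iQ: "invertible Q" using pd_invertible[OF pQ] .
  define Pi where "Pi = matrix_inv P"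
  define Qi where "Qi = matrix_inv Q"
  have tPi: "transpose Pi = Pi" using pd_inv[OF pP] unfolding Pi_def sym_pd_def by blast
  have tQi: "transpose Qi = Qi" using pd_inv[OF pQ] unfolding Qi_def sym_pd_def by blast
  define r where "r = cv - A *v xh"
  define g where "g = matrix_inv S *v r"
  define ds where "ds = P *v (transpose A *v g)"
  define e where "e = x - xs"
  have xs: "xs = xh + ds" unfolding xs_def ds_def g_def r_def ..
  have Sg: "S *v g = r" unfolding g_def matrix_vector_mul_assoc inv_props(1)[OF iS] by simp
  have Sg2: "S *v g = A *v ds + Q *v g" unfolding S_def ds_def
    by (simp add: matrix_vector_mult_add_rdistrib matrix_vector_mul_assoc matrix_mul_assoc)
  have k1: "x - xh = ds + e" unfolding e_def xs by simp
  have k2: "cv - A *v x = Q *v g - A *v e"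
  proof -
    have "cv - A *v x = r - A *v ds - A *v e" unfolding r_def e_def xs by (simp add: algebra_simps)
    moreover have "r = A *v ds + Q *v g" using Sg Sg2 by simp
    ultimately show ?thesis by (rule lin2)
  qed
  have PiP0: "matrix_inv P *v (P *v w) = w" for w
    by (simp only: matrix_vector_mul_assoc inv_props(2)[OF iP] matrix_vector_mul_lid)
  have PiP: "Pi *v ds = transpose A *v g" unfolding Pi_def ds_def by (rule PiP0)
  have QiQ: "Qi *v (Q *v g) = g" unfolding Qi_def matrix_vector_mul_assoc inv_props(2)[OF iQ] by simp
  have m1: "wnorm P (x - xh) = ds \<bullet> (Pi *v ds) + 2 * (e \<bullet> (Pi *v ds)) + e \<bullet> (Pi *v e)"
    unfolding wnorm_def k1 Pi_def[symmetric] by (rule quad_add[OF tPi])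
  have m2: "wnorm Q (cv - A *v x) = (Q *v g) \<bullet> (Qi *v (Q *v g)) - 2 * ((A *v e) \<bullet> (Qi *v (Q *v g))) + (A *v e) \<bullet> (Qi *v (A *v e))"
    unfolding wnorm_def k2 Qi_def[symmetric] by (rule quad_diff[OF tQi])
  have d1: "ds \<bullet> (transpose A *v g) = (A *v ds) \<bullet> g" by (rule dotT[symmetric])
  have d2: "e \<bullet> (transpose A *v g) = (A *v e) \<bullet> g" by (rule dotT[symmetric])
  have c: "(A *v ds) \<bullet> g + (Q *v g) \<bullet> g = r \<bullet> g" using Sg Sg2 by (metis inner_add_left)
  have w1: "wnorm S (cv - A *v xh) = r \<bullet> g" unfolding wnorm_def r_def g_def ..
  have w2: "wnorm P (x - xs) = e \<bullet> (Pi *v e)" unfolding wnorm_def e_def Pi_def ..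
  have w3: "wnorm Q (A *v (x - xs)) = (A *v e) \<bullet> (Qi *v (A *v e))" unfolding wnorm_def e_def Qi_def ..
  show ?thesis unfolding m1 m2 w1 w2 w3 PiP QiQ d1 d2 using c by linarith
qed


lemma is_min_iff: "is_min {f x | x. P x} m \<longleftrightarrow> (\<exists>x. P x \<and> f x = m) \<and> (\<forall>x. P x \<longrightarrow> m \<le> f x)"
  unfolding is_min_def by auto

lemma sum_split_last: "(k::nat) \<ge> 1 \<Longrightarrow> (\<Sum>j=1..k. f j) = (\<Sum>j=1..k-1. f j) + (f k :: real)"
proof -
  assume "k \<ge> 1"
  then obtain m where "k = Suc m" by (cases k) auto
  then show ?thesis by (simp add: sum.cl_ivl_Suc)
qed

locale kf =
  fixes E A :: "real^'n^'n1" and B :: "real^'q^'n1" and H :: "real^'n^'m"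
    and Q :: "real^'n1^'n1" and R :: "real^'m^'m" and P0 :: "real^'n^'n"
    and xbar :: "real^'n" and u :: "nat \<Rightarrow> real^'q" and y :: "nat \<Rightarrow> real^'m"
  assumes pdP0: "sym_pd P0" and pdQ: "sym_pd Q" and pdR: "sym_pd R"
    and injEH: "\<And>x. E *v x = 0 \<Longrightarrow> H *v x = 0 \<Longrightarrow> x = 0"
begin

definition F :: "nat \<Rightarrow> (nat \<Rightarrow> real^'n) \<Rightarrow> real" where
  "F k x = wnorm (A ** P0 ** transpose A + Q) (E *v x 1 - A *v xbar - B *v u 0)
     + (\<Sum>j=1..k-1. wnorm Q (E *v x (j+1) - A *v x j - B *v u j))
     + (\<Sum>j=1..k. wnorm R (y j - H *v x j))"

definition G :: "nat \<Rightarrow> (nat \<Rightarrow> real^'n) \<Rightarrow> real" where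
  "G k x = F k x + wnorm Q (E *v x (Suc k) - A *v x k - B *v u k)"

abbreviation "Pp \<equiv> Pplus E A H Q R P0"
abbreviation "Pm \<equiv> Pminus E A H Q R P0"
abbreviation "xp \<equiv> xplus E A B H Q R P0 xbar u y"

lemma pd_Pp: "sym_pd (Pp k)"
proof (induction k)
  case 0 then show ?case using pdP0 by simp
next
  case (Suc k)
  have "sym_pd (A ** Pp k ** transpose A + Q)" using pd_APAQ[OF Suc pdQ] .
  then show ?case using pd_inv[OF pd_M[OF _ pdR injEH]] by simp
qed

lemma pd_Pm: "sym_pd (Pm k)"
  unfolding Pminus_def using pd_APAQ[OF pd_Pp pdQ] .

lemma meas_step:
  "wnorm (Pm k) (E *v v - (A *v xp k + B *v u k)) + wnorm R (y (Suc k) - H *v v) =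
   wnorm (Pp (Suc k)) (v - xp (Suc k)) +
   (wnorm (Pm k) (E *v xp (Suc k) - (A *v xp k + B *v u k)) + wnorm R (y (Suc k) - H *v xp (Suc k)))"
proof -
  have e1: "Pp (Suc k) = matrix_inv (transpose E ** matrix_inv (Pm k) ** E + transpose H ** matrix_inv R ** H)"
    by (simp add: Pminus_def)
  have e2: "xp (Suc k) = Pp (Suc k) *v (transpose H *v (matrix_inv R *v y (Suc k))) +
      Pp (Suc k) *v (transpose E *v (matrix_inv (Pm k) *v (A *v xp k + B *v u k)))"
    by simp
  show ?thesis unfolding e2 unfolding e1
    by (rule meas_update[OF pd_Pm pdR injEH])
qed

lemma F_upd: "k \<ge> 1 \<Longrightarrow> F k (x(Suc k := v)) = F k x"
  unfolding F_def by (auto intro!: sum.cong)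

lemma F_Suc: "k \<ge> 1 \<Longrightarrow> F (Suc k) x = G k x + wnorm R (y (Suc k) - H *v x (Suc k))"
  unfolding F_def G_def using sum_split_last[of k "\<lambda>j. wnorm Q (E *v x (j+1) - A *v x j - B *v u j)"]
  by simp

definition IH :: "nat \<Rightarrow> real \<Rightarrow> bool" where
  "IH k c \<longleftrightarrow> (\<forall>v. is_min {F k x | x. x k = v} (wnorm (Pp k) (v - xp k) + c))"

lemma IH_base: "IH 1 (wnorm (Pm 0) (E *v xp 1 - (A *v xp 0 + B *v u 0)) + wnorm R (y 1 - H *v xp 1))"
proof -
  have "F 1 x = wnorm (Pm 0) (E *v x 1 - (A *v xp 0 + B *v u 0)) + wnorm R (y 1 - H *v x 1)" for x
    unfolding F_def by (simp add: Pminus_def diff_diff_eq)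
  then have "F 1 x = wnorm (Pp 1) (x 1 - xp 1) +
     (wnorm (Pm 0) (E *v xp 1 - (A *v xp 0 + B *v u 0)) + wnorm R (y 1 - H *v xp 1))" for x
    using meas_step[of 0 "x 1"] by simp
  then show ?thesis unfolding IH_def is_min_iff by auto
qed

lemma G_min:
  assumes k: "k \<ge> 1" and ih: "IH k c"
  shows "is_min {G k x | x. x (Suc k) = v} (wnorm (Pm k) (E *v v - (A *v xp k + B *v u k)) + c)"
proof -
  define cv where "cv = E *v v - B *v u k"
  have S: "A ** Pp k ** transpose A + Q = Pm k" by (simp add: Pminus_def)
  have cvA: "cv - A *v xp k = E *v v - (A *v xp k + B *v u k)" unfolding cv_def by (simp add: algebra_simps)
  have Gx: "G k x = F k x + wnorm Q (cv - A *v x k)" if "x (Suc k) = v" for x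
    unfolding G_def cv_def that by (simp add: algebra_simps)
  define xs where "xs = xp k + Pp k *v (transpose A *v (matrix_inv (A ** Pp k ** transpose A + Q) *v (cv - A *v xp k)))"
  have TU: "wnorm (Pp k) (w - xp k) + wnorm Q (cv - A *v w) =
        wnorm (Pm k) (E *v v - (A *v xp k + B *v u k)) + wnorm (Pp k) (w - xs) + wnorm Q (A *v (w - xs))" for w
    using time_update[OF pd_Pp[of k] pdQ, where A=A and cv=cv and xh="xp k" and x=w] unfolding xs_def S cvA by simp
  have lower: "wnorm (Pm k) (E *v v - (A *v xp k + B *v u k)) + c \<le> G k x" if "x (Suc k) = v" for x
  proof -
    have "wnorm (Pp k) (x k - xp k) + c \<le> F k x" using ih unfolding IH_def is_min_iff by blast
    moreover have "wnorm (Pp k) (x k - xs) \<ge> 0" "wnorm Q (A *v (x k - xs)) \<ge> 0"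
      using wnorm_nonneg[OF pd_Pp] wnorm_nonneg[OF pdQ] by auto
    ultimately show ?thesis using Gx[of x, OF that] TU[of "x k"] by linarith
  qed
  obtain x' where x': "x' k = xs" "F k x' = wnorm (Pp k) (xs - xp k) + c"
    using ih unfolding IH_def is_min_iff by blast
  define x'' where "x'' = x'(Suc k := v)"
  have "x'' (Suc k) = v" unfolding x''_def by simp
  moreover have "G k x'' = wnorm (Pm k) (E *v v - (A *v xp k + B *v u k)) + c"
  proof -
    have "G k x'' = F k x' + wnorm Q (cv - A *v xs)"
    proof -
      have "G k x'' = F k x'' + wnorm Q (cv - A *v x'' k)" by (rule Gx[of "x''", OF \<open>x'' (Suc k) = v\<close>])
      also have "F k x'' = F k x'" unfolding x''_def by (rule F_upd[OF k])
      also have "x'' k = xs" unfolding x''_def using x'(1) by simp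
      finally show ?thesis .
    qed
    then show ?thesis using TU[of xs] x'(2) by (simp add: wnorm_zero)
  qed
  ultimately show ?thesis unfolding is_min_iff using lower by blast
qed

lemma IH_step:
  assumes k: "k \<ge> 1" and ih: "IH k c"
  shows "IH (Suc k) (c + (wnorm (Pm k) (E *v xp (Suc k) - (A *v xp k + B *v u k)) + wnorm R (y (Suc k) - H *v xp (Suc k))))"
  unfolding IH_def
proof
  fix v
  let ?m = "wnorm (Pm k) (E *v v - (A *v xp k + B *v u k)) + c"
  have gm: "is_min {G k x | x. x (Suc k) = v} ?m" by (rule G_min[OF k ih])
  have eq: "?m + wnorm R (y (Suc k) - H *v v) = wnorm (Pp (Suc k)) (v - xp (Suc k)) +
     (c + (wnorm (Pm k) (E *v xp (Suc k) - (A *v xp k + B *v u k)) + wnorm R (y (Suc k) - H *v xp (Suc k))))"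
    using meas_step[of k v] by simp
  have Fx: "F (Suc k) x = G k x + wnorm R (y (Suc k) - H *v v)" if "x (Suc k) = v" for x
    using F_Suc[OF k, of x] that by simp
  show "is_min {F (Suc k) x | x. x (Suc k) = v} (wnorm (Pp (Suc k)) (v - xp (Suc k)) +
     (c + (wnorm (Pm k) (E *v xp (Suc k) - (A *v xp k + B *v u k)) + wnorm R (y (Suc k) - H *v xp (Suc k)))))"
    unfolding eq[symmetric] is_min_iff
  proof
    from gm obtain x where "x (Suc k) = v" "G k x = ?m" unfolding is_min_iff by blast
    then show "\<exists>x. x (Suc k) = v \<and> F (Suc k) x = ?m + wnorm R (y (Suc k) - H *v v)" using Fx by auto
  next
    show "\<forall>x. x (Suc k) = v \<longrightarrow> ?m + wnorm R (y (Suc k) - H *v v) \<le> F (Suc k) x"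
      using gm Fx unfolding is_min_iff by auto
  qed
qed

lemma IH_all: "k \<ge> 1 \<Longrightarrow> \<exists>c. IH k c"
proof (induction k rule: nat_induct_at_least)
  case base then show ?case using IH_base by blast
next
  case (Suc k) then show ?case using IH_step by blast
qed

end


theorem theorem1:
  fixes E A :: "real^'n^'n1" and B :: "real^'q^'n1" and H :: "real^'n^'m"
    and Q :: "real^'n1^'n1" and R :: "real^'m^'m" and P0 :: "real^'n^'n"
    and xbar :: "real^'n" and u :: "nat \<Rightarrow> real^'q" and y :: "nat \<Rightarrow> real^'m"
    and T :: nat
  assumes "rank (hblock E A) = CARD('n1)"
    and "rank (vblock E H) = CARD('n)"
    and "sym_pd P0" and "sym_pd Q" and "sym_pd R"
    and "T \<ge> 2"
  shows "\<exists>Jhat. is_min {Jred E A B H Q R P0 xbar u y T x | x. True} Jhat \<and>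
           (\<forall>xT. is_min {JT E A B H Q R P0 xbar u y T x | x. x T = xT}
              (wnorm (Pminus E A H Q R P0 (T-1))
                 (E *v xT - (A *v xplus E A B H Q R P0 xbar u y (T-1) + B *v u (T-1))) + Jhat))"
proof -
  have inj: "\<And>x. E *v x = 0 \<Longrightarrow> H *v x = 0 \<Longrightarrow> x = 0" using vblock_inj[OF assms(2)] by blast
  interpret L: kf E A B H Q R P0 xbar u y
    by (rule kf.intro) (use assms(3,4,5) inj in auto)
  define K where "K = T - 1"
  have K1: "K \<ge> 1" and TK: "T = Suc K" and T2: "T - 2 = K - 1" using assms(6) unfolding K_def by auto
  obtain c where ih: "L.IH K c" using L.IH_all[OF K1] by blast
  have Jr: "Jred E A B H Q R P0 xbar u y T x = L.F K x" for x
    unfolding Jred_def T2 using L.F_def[where k=K and x=x] by (simp add: K_def)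
  have JG: "JT E A B H Q R P0 xbar u y T x = L.G K x" for x
    unfolding JT_def TK
    using L.G_def[where k=K and x=x] L.F_def[where k=K and x=x] sum_split_last[OF K1, of "\<lambda>j. wnorm Q (E *v x (j+1) - A *v x j - B *v u j)"] by simp
  have ihv: "\<And>v. is_min {L.F K x | x. x K = v}
      (wnorm (Pplus E A H Q R P0 K) (v - xplus E A B H Q R P0 xbar u y K) + c)"
    using ih unfolding L.IH_def by blast
  have m1: "is_min {Jred E A B H Q R P0 xbar u y T x | x. True} c"
    unfolding Jr is_min_iff
  proof
    obtain x where "L.F K x = wnorm (Pplus E A H Q R P0 K) (xplus E A B H Q R P0 xbar u y K - xplus E A B H Q R P0 xbar u y K) + c"
      using ihv[of "xplus E A B H Q R P0 xbar u y K"] unfolding is_min_iff by blast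
    then show "\<exists>x. True \<and> L.F K x = c" by (auto simp: wnorm_zero)
  next
    show "\<forall>x. True \<longrightarrow> c \<le> L.F K x"
    proof (intro allI impI)
      fix x
      have "wnorm (Pplus E A H Q R P0 K) (x K - xplus E A B H Q R P0 xbar u y K) + c \<le> L.F K x"
        using ihv[of "x K"] unfolding is_min_iff by blast
      moreover have "wnorm (Pplus E A H Q R P0 K) (x K - xplus E A B H Q R P0 xbar u y K) \<ge> 0"
        by (rule wnorm_nonneg[OF L.pd_Pp])
      ultimately show "c \<le> L.F K x" by linarith
    qed
  qed
  have m2: "is_min {JT E A B H Q R P0 xbar u y T x | x. x T = xT}
              (wnorm (Pminus E A H Q R P0 (T-1))
                 (E *v xT - (A *v xplus E A B H Q R P0 xbar u y (T-1) + B *v u (T-1))) + c)" for xT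
    unfolding JG K_def[symmetric] unfolding TK
    by (rule L.G_min[OF K1 ih])
  show ?thesis using m1 m2 by blast
qed

end
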